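(* Let $\beta$ be irrational with continued fraction denominators $(q'_n)_{n\ge1}$. Let $f:\mathbb{T}\to\mathbb{R}$ be real analytic and not a trigonometric polynomial, with Fourier coefficients $a_k$, and let $(l_k)_{k\ge1}$ be a strictly increasing sequence of positive integers with $a_{l_k}\neq0$ and $|a_{l_k}|/T_{l_k}\to\infty$, where $T_n=\sum_{j\ge2}|a_{jn}|\,|jn|$. For $k\ge1$ let $\eta(k)$ be the smallest integer with $q'_{\eta(k)}>2k^2/|a_{l_k}|^2$. For $n,m\ge1$ let $V_{n,m}=\{\alpha\in\mathbb{R}\setminus\mathbb{Q}: q_n(\alpha)=l_m \text{ and } q_{n+1}(\alpha)>2q'_{\eta(m)}n^2\}$, $\mathcal{U}_j=\bigcup_{n\ge1}V_{n,j}$, and $\mathcal{U}=\bigcap_{M\ge1}\bigcup_{j\ge M}\mathcal{U}_j$. Then $\mathcal{U}$ is a dense $G_\delta$ subset of $\mathbb{R}$.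
   Context: For an irrational $\gamma=[c_0;c_1,c_2,\dots]$, its continued fraction denominators are $q_0=1$, $q_1=c_1$, $q_n=c_nq_{n-1}+q_{n-2}$; $q_n(\gamma)$ denotes the $n$-th one. $\mathbb{T}=\mathbb{R}/\mathbb{Z}$. *)

theory Defs
  imports "HOL-Analysis.Analysis"
begin

fun cf_rem :: "real \<Rightarrow> nat \<Rightarrow> real" where
  "cf_rem g 0 = g"
| "cf_rem g (Suc n) = 1 / frac (cf_rem g n)"

definition cf_digit :: "real \<Rightarrow> nat \<Rightarrow> int" where
  "cf_digit g n = \<lfloor>cf_rem g n\<rfloor>"

fun cf_den :: "real \<Rightarrow> nat \<Rightarrow> int" where
  "cf_den g 0 = 1"
| "cf_den g (Suc 0) = cf_digit g 1"
| "cf_den g (Suc (Suc n)) = cf_digit g (Suc (Suc n)) * cf_den g (Suc n) + cf_den g n"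

definition real_analytic :: "(real \<Rightarrow> real) \<Rightarrow> bool" where
  "real_analytic f \<longleftrightarrow>
     (\<forall>x. \<exists>r>0. \<exists>c::nat \<Rightarrow> real. \<forall>y. \<bar>y - x\<bar> < r \<longrightarrow> (\<lambda>n. c n * (y - x) ^ n) sums f y)"

text \<open>Fourier coefficients of a 1-periodic function (T = R/Z identified with [0,1)).\<close>
definition fourier_coeff :: "(real \<Rightarrow> real) \<Rightarrow> int \<Rightarrow> complex" where
  "fourier_coeff f k = integral {0..1} (\<lambda>x. complex_of_real (f x) * cis (- 2 * pi * of_int k * x))"

definition trig_polynomial :: "(real \<Rightarrow> real) \<Rightarrow> bool" where
  "trig_polynomial f \<longleftrightarrow>
     (\<exists>N::nat. \<exists>c::int \<Rightarrow> complex. \<forall>x.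
        complex_of_real (f x) = (\<Sum>k\<in>{- int N..int N}. c k * cis (2 * pi * of_int k * x)))"

definition Tsum :: "(real \<Rightarrow> real) \<Rightarrow> nat \<Rightarrow> real" where
  "Tsum f n = (\<Sum>j. cmod (fourier_coeff f (int ((j + 2) * n))) * real ((j + 2) * n))"

definition eta :: "real \<Rightarrow> (real \<Rightarrow> real) \<Rightarrow> (nat \<Rightarrow> nat) \<Rightarrow> nat \<Rightarrow> nat" where
  "eta \<beta> f l k = (LEAST n. n \<ge> 1 \<and>
      real_of_int (cf_den \<beta> n) > 2 * real k ^ 2 / (cmod (fourier_coeff f (int (l k)))) ^ 2)"

definition Vset :: "real \<Rightarrow> (real \<Rightarrow> real) \<Rightarrow> (nat \<Rightarrow> nat) \<Rightarrow> nat \<Rightarrow> nat \<Rightarrow> real set" where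
  "Vset \<beta> f l n m = {\<alpha>. \<alpha> \<notin> \<rat> \<and> cf_den \<alpha> n = int (l m) \<and>
      cf_den \<alpha> (Suc n) > 2 * cf_den \<beta> (eta \<beta> f l m) * int n ^ 2}"

definition Uj :: "real \<Rightarrow> (real \<Rightarrow> real) \<Rightarrow> (nat \<Rightarrow> nat) \<Rightarrow> nat \<Rightarrow> real set" where
  "Uj \<beta> f l j = (\<Union>n\<in>{1..}. Vset \<beta> f l n j)"

definition Uset :: "real \<Rightarrow> (real \<Rightarrow> real) \<Rightarrow> (nat \<Rightarrow> nat) \<Rightarrow> real set" where
  "Uset \<beta> f l = (\<Inter>M\<in>{1..}. \<Union>j\<in>{M..}. Uj \<beta> f l j)"

end

theory Submission
  imports Defs
begin


fun cf_num :: "real \<Rightarrow> nat \<Rightarrow> int" where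
  "cf_num g 0 = cf_digit g 0"
| "cf_num g (Suc 0) = cf_digit g 1 * cf_digit g 0 + 1"
| "cf_num g (Suc (Suc n)) = cf_digit g (Suc (Suc n)) * cf_num g (Suc n) + cf_num g n"

definition cfT :: "real \<Rightarrow> real" where "cfT g = 1 / frac g"

lemma rem_shift: "cf_rem g (Suc n) = cf_rem (cfT g) n"
  by (induction n) (auto simp: cfT_def)

lemma digit_shift: "cf_digit g (Suc n) = cf_digit (cfT g) n"
  by (simp only: cf_digit_def rem_shift)

lemma den_num_shift:
  "cf_den g (Suc n) = cf_num (cfT g) n \<and>
   cf_num g (Suc n) = cf_digit g 0 * cf_num (cfT g) n + cf_den (cfT g) n"
proof (induction n rule: nat_less_induct)
  case (1 n)
  show ?case
  proof (cases n)
    case 0 then show ?thesis by (simp add: digit_shift)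
  next
    case (Suc m) note m = this
    show ?thesis
    proof (cases m)
      case 0 then show ?thesis using m by (simp add: digit_shift algebra_simps)
    next
      case (Suc k)
      have a: "cf_den g (Suc k) = cf_num (cfT g) k \<and>
   cf_num g (Suc k) = cf_digit g 0 * cf_num (cfT g) k + cf_den (cfT g) k" using 1 m Suc by (metis less_SucI lessI)
      have b: "cf_den g (Suc (Suc k)) = cf_num (cfT g) (Suc k) \<and>
   cf_num g (Suc (Suc k)) = cf_digit g 0 * cf_num (cfT g) (Suc k) + cf_den (cfT g) (Suc k)" using 1 m Suc by (metis lessI)
      have e1: "cf_den g (Suc (Suc (Suc k))) = cf_digit g (Suc (Suc (Suc k))) * cf_den g (Suc (Suc k)) + cf_den g (Suc k)"
        by simp
      have e2: "cf_num g (Suc (Suc (Suc k))) = cf_digit g (Suc (Suc (Suc k))) * cf_num g (Suc (Suc k)) + cf_num g (Suc k)"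
        by simp
      have e3: "cf_num (cfT g) (Suc (Suc k)) = cf_digit (cfT g) (Suc (Suc k)) * cf_num (cfT g) (Suc k) + cf_num (cfT g) k"
        by simp
      have e4: "cf_den (cfT g) (Suc (Suc k)) = cf_digit (cfT g) (Suc (Suc k)) * cf_den (cfT g) (Suc k) + cf_den (cfT g) k"
        by simp
      have e5: "cf_digit g (Suc (Suc (Suc k))) = cf_digit (cfT g) (Suc (Suc k))" by (rule digit_shift)
      show ?thesis unfolding m Suc e1 e2 e3 e4 e5 using a b
        by (simp add: algebra_simps)
    qed
  qed
qed

lemma exists_irrat: "\<exists>z::real. z \<notin> \<rat>"
  using countable_rat uncountable_UNIV_real by (metis UNIV_eq_I)

lemma big_irrat: "\<exists>y::real. y \<notin> \<rat> \<and> y > B"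
proof -
  obtain z :: real where z: "z \<notin> \<rat>" using exists_irrat by blast
  define y where "y = z + of_int (\<lceil>\<bar>B\<bar> - z\<rceil> + 1)"
  have "y \<notin> \<rat>" unfolding y_def using z by (simp add: Rats_add_iff)
  moreover have "y > B" unfolding y_def by linarith
  ultimately show ?thesis by blast
qed

lemma irrat_inv: "(x::real) \<notin> \<rat> \<Longrightarrow> 1 / x \<notin> \<rat>"
  by (metis Rats_inverse inverse_eq_divide inverse_inverse_eq)

lemma irrat_add_int: "(x::real) \<notin> \<rat> \<Longrightarrow> of_int c + x \<notin> \<rat>"
  by (simp add: Rats_add_iff)

lemma floor_c_t: "0 < t \<Longrightarrow> t < 1 \<Longrightarrow> \<lfloor>of_int c + (t::real)\<rfloor> = c"
  by linarith

lemma frac_c_t: assumes "0 < t" "t < 1" shows "frac (of_int c + (t::real)) = t"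
  unfolding frac_def floor_c_t[OF assms] by simp

lemma cfT_c_t: "0 < t \<Longrightarrow> t < 1 \<Longrightarrow> cfT (of_int c + (t::real)) = 1 / t"
  by (simp add: cfT_def frac_c_t)

lemma digit0: "cf_digit g 0 = \<lfloor>g\<rfloor>"
  by (simp add: cf_digit_def)

lemma num0: "cf_num g 0 = \<lfloor>g\<rfloor>"
  by (simp add: cf_digit_def)

lemma hA: fixes l r :: nat assumes "1 \<le> r" "r < l" shows "real l / real r - 1 / real r \<ge> 1"
proof -
  have "real l - 1 \<ge> real r" using assms by linarith
  then show ?thesis using assms by (simp add: diff_divide_distrib[symmetric] le_divide_eq)
qed
lemma hB: fixes l r c p :: nat assumes "p = c * l + r" "2 \<le> l" shows "real p / real l = real c + real r / real l"
  using assms by (simp add: add_divide_distrib)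
lemma hC: fixes l r :: nat and \<beta> :: real assumes "1 < \<beta>" "1 \<le> r" "2 \<le> l"
  shows "\<bar>1/\<beta> - real r / real l\<bar> = \<bar>\<beta> - real l / real r\<bar> * (real r / (\<beta> * real l))"
proof -
  have "1/\<beta> - real r / real l = (real l / real r - \<beta>) * (real r / (\<beta> * real l))"
    using assms by (simp add: field_simps)
  then show ?thesis using assms by (simp add: abs_mult abs_minus_commute)
qed
lemma hD: fixes l r :: nat and \<beta> :: real assumes "1 < \<beta>" "1 \<le> r" "r < l"
  shows "real r / (\<beta> * real l) \<le> 1"
proof -
  have "real r \<le> real l" using assms by simp
  also have "\<dots> = 1 * real l" by simp
  also have "\<dots> \<le> \<beta> * real l" using assms by (intro mult_right_mono) auto
  finally have "real r \<le> \<beta> * real l" .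
  then show ?thesis using assms by (simp add: divide_le_eq_1)
qed

lemma Qlemma:
  fixes l p :: nat and C \<epsilon> :: real
  assumes "1 \<le> l" "1 \<le> p" "coprime p l" "0 < \<epsilon>"
  shows "\<exists>\<alpha>. \<alpha> \<notin> \<rat> \<and> \<bar>\<alpha> - real p / real l\<bar> < \<epsilon> \<and>
     (\<exists>n. 1 \<le> n \<and> n \<le> l \<and> cf_den \<alpha> n = int l \<and> cf_num \<alpha> n = int p \<and>
          C < cf_den \<alpha> (Suc n) \<and> C < cf_num \<alpha> (Suc n))"
  using assms
proof (induction l arbitrary: p C \<epsilon> rule: less_induct)
  case (less l)
  show ?case
  proof (cases "l = 1")
    case True
    obtain y :: real where y: "y \<notin> \<rat>" "y > max (\<bar>C\<bar> + 1) (max 1 (1/\<epsilon>))"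
      using big_irrat by blast
    have y1: "y > 1" using y by auto
    define t where "t = 1 / (1 + 1/y)"
    have t0: "0 < t" "t < 1" using y1 by (auto simp: t_def field_simps)
    define \<alpha> where "\<alpha> = of_int (int p - 1) + t"
    have T1: "cfT \<alpha> = of_int 1 + 1/y" unfolding \<alpha>_def using cfT_c_t[OF t0, of "int p - 1"] by (simp add: t_def)
    have y01: "0 < 1/y" "1/y < 1" using y1 by auto
    have T2: "cfT (cfT \<alpha>) = y" unfolding T1 using cfT_c_t[OF y01, of 1] by simp
    have d0: "cf_digit \<alpha> 0 = int p - 1" unfolding digit0 \<alpha>_def using t0 floor_c_t by blast
    have d1: "cf_digit (cfT \<alpha>) 0 = 1" unfolding digit0 T1 using y01 floor_c_t by blast
    have "t \<notin> \<rat>" unfolding t_def using y by (simp add: irrat_inv irrat_add_int[of "1/y" 1, simplified])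
    then have irr: "\<alpha> \<notin> \<rat>" unfolding \<alpha>_def by (rule irrat_add_int)
    have e1: "cf_den \<alpha> 1 = 1" using den_num_shift[of \<alpha> 0] d1 by simp
    have e2: "cf_num \<alpha> 1 = int p" using den_num_shift[of \<alpha> 0] d1 d0 by simp
    have e3: "cf_den (cfT \<alpha>) 1 = \<lfloor>y\<rfloor>" using den_num_shift[of "cfT \<alpha>" 0] T2 by (simp add: num0 digit0)
    have e4: "cf_num (cfT \<alpha>) 1 = \<lfloor>y\<rfloor> + 1" using den_num_shift[of "cfT \<alpha>" 0] T2 d1 by (simp add: num0 digit0)
    have e5: "cf_den \<alpha> 2 = \<lfloor>y\<rfloor> + 1" using den_num_shift[of \<alpha> 1] e4 by (simp add: numeral_2_eq_2)
    have e6: "cf_num \<alpha> 2 = (int p - 1) * (\<lfloor>y\<rfloor> + 1) + \<lfloor>y\<rfloor>" using den_num_shift[of \<alpha> 1] e4 e3 d0 by (simp add: numeral_2_eq_2)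
    have fy: "real_of_int \<lfloor>y\<rfloor> > C" using y by linarith
    have "(int p - 1) * (\<lfloor>y\<rfloor> + 1) \<ge> 0" using less.prems y1 by (simp add: zero_le_mult_iff)
    then have c6: "C < cf_num \<alpha> 2" unfolding e6 using fy by linarith
    have c5: "C < cf_den \<alpha> 2" unfolding e5 using fy by linarith
    have "\<bar>\<alpha> - real p / real l\<bar> = 1 - t" unfolding \<alpha>_def using True t0 less.prems by (simp add: of_nat_diff)
    also have "\<dots> = 1 / (y + 1)" unfolding t_def using y1 by (simp add: field_simps)
    also have "\<dots> < \<epsilon>" using y less.prems by (simp add: field_simps)
    finally have cl: "\<bar>\<alpha> - real p / real l\<bar> < \<epsilon>" .
    show ?thesis
      apply (rule exI[of _ \<alpha>])
      using irr cl True e1 e2 c5 c6 by (intro conjI exI[of _ 1]) (auto simp: numeral_2_eq_2)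
  next
    case False
    with less.prems have l2: "l \<ge> 2" by simp
    define c where "c = p div l"
    define r where "r = p mod l"
    have pcr: "p = c * l + r" unfolding c_def r_def by simp
    have rl: "r < l" unfolding r_def using l2 by simp
    have r1: "r \<ge> 1"
    proof (rule ccontr)
      assume "\<not> r \<ge> 1"
      then have "l dvd p" unfolding r_def by (simp add: dvd_eq_mod_eq_0 not_less_eq_eq)
      then have "l dvd gcd p l" by simp
      with less.prems(3) l2 show False by simp
    qed
    have cop: "coprime l r" unfolding r_def using less.prems(3) l2
      by (simp add: coprime_commute)
    define \<epsilon>' where "\<epsilon>' = min \<epsilon> (1 / real r)"
    have e'0: "\<epsilon>' > 0" unfolding \<epsilon>'_def using less.prems r1 by simp
    obtain \<beta> n where b: "\<beta> \<notin> \<rat>" "\<bar>\<beta> - real l / real r\<bar> < \<epsilon>'" "1 \<le> n" "n \<le> r"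
      "cf_den \<beta> n = int r" "cf_num \<beta> n = int l" "max C 0 < cf_den \<beta> (Suc n)" "max C 0 < cf_num \<beta> (Suc n)"
      using less.IH[OF rl r1 _ cop e'0, of "max C 0"] l2 by auto
    have "\<beta> > real l / real r - 1 / real r" using b(2) unfolding \<epsilon>'_def by linarith
    moreover have "real l / real r - 1 / real r \<ge> 1" using hA r1 rl by blast
    ultimately have b1: "\<beta> > 1" by linarith
    define t where "t = 1 / \<beta>"
    have t0: "0 < t" "t < 1" unfolding t_def using b1 by auto
    define \<alpha> where "\<alpha> = of_int (int c) + t"
    have T1: "cfT \<alpha> = \<beta>" unfolding \<alpha>_def using cfT_c_t[OF t0, of "int c"] by (simp add: t_def)
    have d0: "cf_digit \<alpha> 0 = int c" unfolding digit0 \<alpha>_def using t0 floor_c_t by blast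
    have irr: "\<alpha> \<notin> \<rat>" unfolding \<alpha>_def t_def using b(1) by (intro irrat_add_int irrat_inv)
    have e1: "cf_den \<alpha> (Suc n) = int l" using den_num_shift[of \<alpha> n] T1 b by simp
    have e2: "cf_num \<alpha> (Suc n) = int p" using den_num_shift[of \<alpha> n] T1 b d0 pcr by simp
    have e3: "cf_den \<alpha> (Suc (Suc n)) = cf_num \<beta> (Suc n)" using den_num_shift[of \<alpha> "Suc n"] T1 by simp
    have e4: "cf_num \<alpha> (Suc (Suc n)) = int c * cf_num \<beta> (Suc n) + cf_den \<beta> (Suc n)"
      using den_num_shift[of \<alpha> "Suc n"] T1 d0 by simp
    have c3: "C < cf_den \<alpha> (Suc (Suc n))" using e3 b(8) by linarith
    have "int c * cf_num \<beta> (Suc n) \<ge> 0" using b(8) by simp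
    then have c4: "C < cf_num \<alpha> (Suc (Suc n))" using e4 b(7) by linarith
    have pl: "real p / real l = real c + real r / real l" using hB pcr l2 by blast
    have "\<bar>\<alpha> - real p / real l\<bar> = \<bar>1/\<beta> - real r / real l\<bar>" unfolding \<alpha>_def pl t_def by simp
    also have "\<dots> = \<bar>\<beta> - real l / real r\<bar> * (real r / (\<beta> * real l))"
      using hC b1 r1 l2 by blast
    also have "\<dots> \<le> \<bar>\<beta> - real l / real r\<bar>"
    proof -
      have "real r / (\<beta> * real l) \<le> 1" using hD b1 r1 rl by blast
      then show ?thesis by (metis abs_ge_zero mult_left_le)
    qed
    also have "\<dots> < \<epsilon>" using b(2) unfolding \<epsilon>'_def by linarith
    finally have cl: "\<bar>\<alpha> - real p / real l\<bar> < \<epsilon>" .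
    show ?thesis
      apply (rule exI[of _ \<alpha>])
      using irr cl e1 e2 c3 c4 b(3,4) rl by (intro conjI exI[of _ "Suc n"]) auto
  qed
qed



definition cntset :: "int set \<Rightarrow> real \<Rightarrow> real \<Rightarrow> int set" where
  "cntset S X W = {m::int. X < of_int m \<and> of_int m \<le> X + W \<and> (\<forall>q\<in>S. \<not> q dvd m)}"

lemma cntset_finite: "finite (cntset S X W)"
proof -
  have "cntset S X W \<subseteq> {\<lfloor>X\<rfloor>..\<lceil>X + W\<rceil>}"
    unfolding cntset_def by (auto, linarith+)
  then show ?thesis by (rule finite_subset) simp
qed

lemma cnt_base:
  assumes "W \<ge> 0"
  shows "\<bar>real (card (cntset {} X W)) - W\<bar> \<le> 1"
proof -
  have "cntset {} X W = {\<lfloor>X\<rfloor> + 1..\<lfloor>X + W\<rfloor>}"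
    unfolding cntset_def by (auto simp: floor_less_iff le_floor_iff) (linarith+)
  then have c: "card (cntset {} X W) = nat (\<lfloor>X + W\<rfloor> - \<lfloor>X\<rfloor>)" by simp
  have "\<lfloor>X + W\<rfloor> - \<lfloor>X\<rfloor> \<ge> 0" using assms by (simp add: floor_mono)
  then have "real (card (cntset {} X W)) = of_int (\<lfloor>X + W\<rfloor>) - of_int \<lfloor>X\<rfloor>" unfolding c by simp
  then show ?thesis by linarith
qed

lemma cnt_step:
  fixes q :: int
  assumes "prime q" "q \<notin> S" "\<forall>s\<in>S. prime s"
  shows "card (cntset (insert q S) X W) = card (cntset S X W) - card (cntset S (X / q) (W / q))"
    and "card (cntset S (X / q) (W / q)) \<le> card (cntset S X W)"
proof -
  have q0: "q > 0" using assms prime_gt_0_int by blast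
  define B where "B = cntset S X W"
  define Bq where "Bq = {m \<in> B. q dvd m}"
  have e1: "cntset (insert q S) X W = B - Bq" unfolding B_def Bq_def cntset_def by auto
  have e2: "Bq = (\<lambda>m. q * m) ` cntset S (X / q) (W / q)"
  proof
    show "Bq \<subseteq> (\<lambda>m. q * m) ` cntset S (X / q) (W / q)"
    proof
      fix m assume m: "m \<in> Bq"
      then obtain k where k: "m = q * k" unfolding Bq_def by (auto elim: dvdE)
      have "X < of_int q * of_int k" "of_int q * of_int k \<le> X + W" "\<forall>s\<in>S. \<not> s dvd q * k"
        using m k unfolding Bq_def B_def cntset_def by auto
      then have "k \<in> cntset S (X / q) (W / q)" unfolding cntset_def using q0
        by (auto simp: field_simps mult.commute)
      then show "m \<in> (\<lambda>m. q * m) ` cntset S (X / q) (W / q)" using k by blast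
    qed
  next
    show "(\<lambda>m. q * m) ` cntset S (X / q) (W / q) \<subseteq> Bq"
    proof
      fix m assume "m \<in> (\<lambda>m. q * m) ` cntset S (X / q) (W / q)"
      then obtain k where k: "m = q * k" "k \<in> cntset S (X / q) (W / q)" by blast
      have a: "X / q < of_int k" "of_int k \<le> X / q + W / q" "\<forall>s\<in>S. \<not> s dvd k"
        using k unfolding cntset_def by auto
      have b: "\<forall>s\<in>S. \<not> s dvd q * k"
      proof
        fix s assume s: "s \<in> S"
        show "\<not> s dvd q * k"
        proof
          assume "s dvd q * k"
          then have "s dvd q \<or> s dvd k" using assms s prime_dvd_mult_iff by blast
          moreover have "\<not> s dvd q" using primes_dvd_imp_eq assms s by metis
          ultimately show False using a s by blast
        qed
      qed
      have "X < of_int q * of_int k" "of_int q * of_int k \<le> X + W"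
        using a q0 by (auto simp: field_simps mult.commute)
      then show "m \<in> Bq" unfolding Bq_def B_def cntset_def k using b by auto
    qed
  qed
  have inj: "inj_on (\<lambda>m. q * m) (cntset S (X / q) (W / q))" using q0 by (auto simp: inj_on_def)
  have cq: "card Bq = card (cntset S (X / q) (W / q))" unfolding e2 using inj by (rule card_image)
  have sub: "Bq \<subseteq> B" unfolding Bq_def by auto
  have fB: "finite B" unfolding B_def by (rule cntset_finite)
  show "card (cntset (insert q S) X W) = card (cntset S X W) - card (cntset S (X / q) (W / q))"
    unfolding e1 using card_Diff_subset[OF finite_subset[OF sub fB] sub] cq B_def by simp
  show "card (cntset S (X / q) (W / q)) \<le> card (cntset S X W)"
    using card_mono[OF fB sub] cq B_def by simp
qed

lemma sieve:
  fixes S :: "int set"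
  assumes "finite S" "\<forall>q\<in>S. prime q" "W \<ge> 0"
  shows "\<bar>real (card (cntset S X W)) - W * (\<Prod>q\<in>S. 1 - 1 / real_of_int q)\<bar> \<le> 2 ^ card S"
  using assms
proof (induction S arbitrary: X W rule: finite_induct)
  case empty
  then show ?case using cnt_base by simp
next
  case (insert q S)
  have q: "prime q" using insert by simp
  have q0: "real_of_int q > 0" using q prime_gt_0_int by simp
  have W': "W / q \<ge> 0" using insert.prems q0 by simp
  have h1: "\<bar>real (card (cntset S X W)) - W * (\<Prod>q\<in>S. 1 - 1 / real_of_int q)\<bar> \<le> 2 ^ card S"
    using insert by simp
  have h2: "\<bar>real (card (cntset S (X/q) (W/q))) - W/q * (\<Prod>q\<in>S. 1 - 1 / real_of_int q)\<bar> \<le> 2 ^ card S"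
    using insert.IH[of "W/q" "X/q"] insert.prems W' by auto
  have c: "real (card (cntset (insert q S) X W)) = real (card (cntset S X W)) - real (card (cntset S (X/q) (W/q)))"
    using cnt_step[OF q insert(2)] insert.prems by (simp add: of_nat_diff)
  have p: "W * (\<Prod>q\<in>insert q S. 1 - 1 / real_of_int q) = W * (\<Prod>q\<in>S. 1 - 1 / real_of_int q) - W/q * (\<Prod>q\<in>S. 1 - 1 / real_of_int q)"
    using insert(1,2) by (simp add: algebra_simps)
  show ?case unfolding c p using h1 h2 insert(1,2) by simp
qed



lemma prod_bounds:
  "\<forall>S::int set. finite S \<and> card S = n \<and> (\<forall>q\<in>S. q \<ge> 2) \<longrightarrow>
     (\<Prod>q\<in>S. 1 - 1 / real_of_int q) \<ge> 1 / (real n + 1) \<and> of_nat (fact (n + 1)) \<le> (\<Prod>q\<in>S. q)"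
proof (induction n)
  case 0
  show ?case
  proof (intro allI impI)
    fix S :: "int set" assume "finite S \<and> card S = 0 \<and> (\<forall>q\<in>S. q \<ge> 2)"
    then have "S = {}" by auto
    then show "(\<Prod>q\<in>S. 1 - 1 / real_of_int q) \<ge> 1 / (real 0 + 1) \<and> of_nat (fact (0 + 1)) \<le> (\<Prod>q\<in>S. q)" by simp
  qed
next
  case (Suc n)
  show ?case
  proof (intro allI impI)
    fix S :: "int set" assume S: "finite S \<and> card S = Suc n \<and> (\<forall>q\<in>S. q \<ge> 2)"
    then have ne: "S \<noteq> {}" by auto
    define m where "m = Max S"
    have mS: "m \<in> S" unfolding m_def using S ne by simp
    have sub: "S \<subseteq> {2..m}" unfolding m_def using S by auto
    have "card S \<le> card {2..m}" using card_mono[OF _ sub] by simp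
    then have "Suc n \<le> nat (m - 1)" using S by simp
    moreover have "m \<ge> 2" using S mS by auto
    ultimately have mge: "m \<ge> int n + 2" by linarith
    define S' where "S' = S - {m}"
    have S': "finite S' \<and> card S' = n \<and> (\<forall>q\<in>S'. q \<ge> 2)" unfolding S'_def using S mS by auto
    have IH: "(\<Prod>q\<in>S'. 1 - 1 / real_of_int q) \<ge> 1 / (real n + 1)" "of_nat (fact (n + 1)) \<le> (\<Prod>q\<in>S'. q)"
      using Suc S' by blast+
    have p1: "(\<Prod>q\<in>S. 1 - 1 / real_of_int q) = (1 - 1 / real_of_int m) * (\<Prod>q\<in>S'. 1 - 1 / real_of_int q)"
      unfolding S'_def using S mS by (simp add: prod.remove)
    have p2: "(\<Prod>q\<in>S. q) = m * (\<Prod>q\<in>S'. q)"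
      unfolding S'_def using S mS by (simp add: prod.remove)
    have mr: "real_of_int m \<ge> real n + 2" using mge by linarith
    have a: "1 - 1 / real_of_int m \<ge> (real n + 1) / (real n + 2)"
    proof -
      have "1 / real_of_int m \<le> 1 / (real n + 2)" using mr by (intro divide_left_mono) auto
      moreover have "1 - 1 / (real n + 2) = (real n + 1) / (real n + 2)" by (simp add: field_simps)
      ultimately show ?thesis by linarith
    qed
    have "(real n + 1) / (real n + 2) * (1 / (real n + 1)) \<le> (1 - 1 / real_of_int m) * (\<Prod>q\<in>S'. 1 - 1 / real_of_int q)"
      using a IH(1) mr by (intro mult_mono) (auto simp: field_simps)
    then have g1: "(\<Prod>q\<in>S. 1 - 1 / real_of_int q) \<ge> 1 / (real (Suc n) + 1)" unfolding p1
      by (simp add: field_simps)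
    have "of_nat (fact (Suc n + 1)) = (int n + 2) * of_nat (fact (n + 1))" by (simp add: algebra_simps)
    also have "\<dots> \<le> m * (\<Prod>q\<in>S'. q)" using mge IH(2) by (intro mult_mono) auto
    finally have g2: "of_nat (fact (Suc n + 1)) \<le> (\<Prod>q\<in>S. q)" unfolding p2 .
    show "(\<Prod>q\<in>S. 1 - 1 / real_of_int q) \<ge> 1 / (real (Suc n) + 1) \<and> of_nat (fact (Suc n + 1)) \<le> (\<Prod>q\<in>S. q)"
      using g1 g2 by blast
  qed
qed

lemma growth: "(w + 1)^2 * 4^w \<le> 64 * fact (w + 1 :: nat)"
proof (induction w)
  case 0 then show ?case by simp
next
  case (Suc w)
  show ?case
  proof (cases "w < 4")
    case True
    then have "w = 0 \<or> w = 1 \<or> w = 2 \<or> w = 3" by auto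
    then show ?thesis by (elim disjE) (simp_all add: fact_numeral power2_eq_square)
  next
    case False
    have "4 * (w + 2) \<le> (w + 1)^2" 
    proof -
      have "4 * w \<le> w * w" using False by (intro mult_le_mono1) simp
      then have "7 + w * 2 \<le> w * w" using False by linarith
      then show ?thesis by (simp add: power2_eq_square algebra_simps)
    qed
    have "(Suc w + 1)^2 * 4^(Suc w) = (w + 2) * (4 * (w + 2)) * 4^w" by (simp add: power2_eq_square algebra_simps)
    also have "\<dots> \<le> (w + 2) * (w + 1)^2 * 4^w" by (rule mult_le_mono1, rule mult_le_mono2, rule \<open>4 * (w + 2) \<le> (w + 1)^2\<close>)
    also have "\<dots> \<le> (w + 2) * (64 * fact (w + 1))" unfolding mult.assoc[of "w+2"] by (rule mult_le_mono2, rule Suc.IH)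
    also have "\<dots> = 64 * fact (Suc w + 1)" by simp
    finally show ?thesis .
  qed
qed



lemma prod_pf_le: fixes L :: int assumes "L > 0" shows "(\<Prod>p\<in>prime_factors L. p) \<le> L"
proof -
  have "(\<Prod>p\<in>prime_factors L. p) \<le> (\<Prod>p\<in>prime_factors L. p ^ multiplicity p L)"
  proof (rule prod_mono)
    fix p assume p: "p \<in> prime_factors L"
    then have "prime p" "multiplicity p L > 0" using assms prime_factors_multiplicity by auto
    then have "p \<ge> 1" "multiplicity p L \<ge> 1" using prime_gt_0_int by (auto simp: int_one_le_iff_zero_less)
    then show "0 \<le> p \<and> p \<le> p ^ multiplicity p L"
      by (auto intro: self_le_power[of p "multiplicity p L", simplified])
  qed
  also have "\<dots> = L" using prime_factorization_int[OF assms] by simp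
  finally show ?thesis .
qed

lemma coprime_window:
  fixes L :: nat and \<epsilon> X :: real
  assumes "L \<ge> 1" "\<epsilon> > 0" "real L > 64 / \<epsilon>^2"
  shows "\<exists>m::int. X < m \<and> m \<le> X + \<epsilon> * L \<and> coprime m (int L)"
proof -
  define S where "S = prime_factors (int L)"
  define w where "w = card S"
  have fS: "finite S" unfolding S_def by simp
  have pS: "\<forall>q\<in>S. prime q" unfolding S_def by auto
  have gS: "\<forall>q\<in>S. q \<ge> 2" using pS prime_ge_2_int by blast
  have pb: "(\<Prod>q\<in>S. 1 - 1 / real_of_int q) \<ge> 1 / (real w + 1)" "of_nat (fact (w + 1)) \<le> (\<Prod>q\<in>S. q)"
    using prod_bounds[of w] fS gS w_def by blast+
  have "(\<Prod>q\<in>S. q) \<le> int L" unfolding S_def using assms by (intro prod_pf_le) simp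
  with pb(2) have fL: "fact (w + 1) \<le> L" by linarith
  have "(w + 1)^2 * 4^w \<le> 64 * L" using growth[of w] fL by linarith
  then have x2: "(real w + 1)^2 * 4^w \<le> 64 * real L" by (metis (mono_tags, lifting) of_nat_1 of_nat_add of_nat_le_iff of_nat_mult of_nat_numeral of_nat_power)
  define x where "x = (real w + 1) * 2^w"
  have "x^2 = (real w + 1)^2 * 4^w" 
  proof -
    have "(2::real) ^ (w * 2) = 4 ^ w" unfolding mult.commute[of w 2] power_mult by simp
    then show ?thesis unfolding x_def by (simp add: power_mult_distrib power_mult[symmetric])
  qed
  also have "\<dots> \<le> 64 * real L" by (rule x2)
  also have "\<dots> < (\<epsilon> * real L)^2"
  proof -
    have "\<epsilon>^2 * real L > 64" using assms by (simp add: field_simps)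
    then have "\<epsilon>^2 * real L * real L > 64 * real L" using assms by simp
    then show ?thesis by (simp add: power2_eq_square algebra_simps)
  qed
  finally have x2lt: "x^2 < (\<epsilon> * real L)^2" .
  have "0 \<le> \<epsilon> * real L" using assms by simp
  with x2lt have "x < \<epsilon> * real L" by (rule power_less_imp_less_base)
  then have k: "\<epsilon> * real L / (real w + 1) > 2^w" unfolding x_def by (simp add: field_simps)
  define W where "W = \<epsilon> * real L"
  have W0: "W \<ge> 0" unfolding W_def using assms by simp
  have sv: "\<bar>real (card (cntset S X W)) - W * (\<Prod>q\<in>S. 1 - 1 / real_of_int q)\<bar> \<le> 2 ^ w"
    unfolding w_def using sieve[OF fS pS W0] .
  have "W * (\<Prod>q\<in>S. 1 - 1 / real_of_int q) \<ge> W * (1 / (real w + 1))"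
    using pb(1) W0 by (rule mult_left_mono)
  then have "real (card (cntset S X W)) > 0" using sv k unfolding W_def by simp
  then have "cntset S X W \<noteq> {}" by auto
  then obtain m where m: "m \<in> cntset S X W" by blast
  have cop: "coprime m (int L)"
  proof (rule ccontr)
    assume nc: "\<not> coprime m (int L)"
    have g0: "gcd m (int L) \<noteq> 0" using assms by simp
    have "\<not> is_unit (gcd m (int L))" using nc by (simp add: coprime_iff_gcd_eq_1)
    then obtain p where p: "prime p" "p dvd gcd m (int L)" using prime_divisorE g0 by blast
    then have "p dvd m" "p dvd int L" by auto
    then have "p \<in> S" unfolding S_def using p assms by (simp add: prime_factors_dvd)
    then show False using m \<open>p dvd m\<close> unfolding cntset_def by auto
  qed
  show ?thesis using m cop unfolding cntset_def W_def by auto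
qed



lemma irrat_not_int: "(x::real) \<notin> \<rat> \<Longrightarrow> x \<notin> \<int>"
  using Ints_subset_Rats by blast

lemma frac_irrat: assumes "(x::real) \<notin> \<rat>" shows "frac x \<notin> \<rat>"
proof
  assume "frac x \<in> \<rat>"
  then have "frac x + of_int \<lfloor>x\<rfloor> \<in> \<rat>" by (intro Rats_add) auto
  then show False using assms by (simp add: frac_def)
qed

lemma rem_irrat: "\<alpha> \<notin> \<rat> \<Longrightarrow> cf_rem \<alpha> n \<notin> \<rat>"
  by (induction n) (auto intro!: irrat_inv frac_irrat)

lemma rem_cont: "\<alpha> \<notin> \<rat> \<Longrightarrow> isCont (\<lambda>x. cf_rem x n) \<alpha>"
proof (induction n)
  case 0 then show ?case by simp
next
  case (Suc n)
  have ni: "cf_rem \<alpha> n \<notin> \<int>" using rem_irrat[OF Suc.prems] irrat_not_int by blast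
  have c1: "isCont (\<lambda>x. frac (cf_rem x n)) \<alpha>"
    using isCont_o2[OF Suc.IH[OF Suc.prems] continuous_frac[OF ni]] .
  have nz: "frac (cf_rem \<alpha> n) \<noteq> 0"
    using frac_irrat[OF rem_irrat[OF Suc.prems, of n]] by (rule contrapos_nn) (metis Rats_0)
  have "isCont (\<lambda>x. 1 / frac (cf_rem x n)) \<alpha>"
    using c1 nz by (intro continuous_intros) auto
  then show ?case by simp
qed

lemma digit_ev: assumes "\<alpha> \<notin> \<rat>" shows "eventually (\<lambda>x. cf_digit x n = cf_digit \<alpha> n) (nhds \<alpha>)"
proof -
  define y where "y = cf_rem \<alpha> n"
  define k where "k = \<lfloor>y\<rfloor>"
  have ni: "y \<notin> \<int>" unfolding y_def using rem_irrat[OF assms] irrat_not_int by blast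
  have "y \<noteq> of_int k" using ni by auto
  then have yin: "y \<in> {of_int k<..<of_int k + 1}" unfolding k_def by (auto, linarith+)
  have "((\<lambda>x. cf_rem x n) \<longlongrightarrow> y) (at \<alpha>)" using rem_cont[OF assms, of n] unfolding y_def isCont_def .
  then have "eventually (\<lambda>x. cf_rem x n \<in> {of_int k<..<of_int k + 1}) (at \<alpha>)"
    using yin by (intro topological_tendstoD) auto
  then have "eventually (\<lambda>x. cf_digit x n = k) (at \<alpha>)"
    by eventually_elim (auto simp: cf_digit_def floor_eq_iff)
  moreover have "cf_digit \<alpha> n = k" unfolding k_def y_def cf_digit_def ..
  ultimately show ?thesis unfolding eventually_nhds_conv_at by auto
qed

lemma den_ev: "\<alpha> \<notin> \<rat> \<Longrightarrow> eventually (\<lambda>x. cf_den x n = cf_den \<alpha> n) (nhds \<alpha>)"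
proof (induction \<alpha> n rule: cf_den.induct)
  case (1 g) then show ?case by simp
next
  case (2 g) then show ?case using digit_ev[of g 1] by simp
next
  case (3 g n)
  have a: "eventually (\<lambda>x. cf_den x (Suc n) = cf_den g (Suc n)) (nhds g)" using 3 by blast
  have b: "eventually (\<lambda>x. cf_den x n = cf_den g n) (nhds g)" using 3 by blast
  have c: "eventually (\<lambda>x. cf_digit x (Suc (Suc n)) = cf_digit g (Suc (Suc n))) (nhds g)"
    using 3 digit_ev by blast
  show ?case using eventually_conj[OF a eventually_conj[OF b c]] by (rule eventually_mono) auto
qed



lemma coprime_shift: fixes m k L :: int assumes "coprime m L" shows "coprime (m + k * L) L"
proof -
  have "gcd L (k * L + m) = gcd L m" by (rule gcd_add_mult)
  then have "gcd (m + k * L) L = gcd m L" by (simp add: gcd.commute add.commute)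
  then show ?thesis using assms by (simp add: coprime_iff_gcd_eq_1)
qed

lemma den_int_shift: "cf_den (x + of_int k) n = cf_den x n"
proof -
  have T: "cfT (y + of_int k) = cfT y" for y by (simp add: cfT_def frac_add_of_int_right)
  have d: "cf_digit (y + of_int k) (Suc j) = cf_digit y (Suc j)" for y j
    by (simp only: digit_shift T)
  show ?thesis
    by (induction x n rule: cf_den.induct) (simp_all add: d[of 0, simplified] d)
qed

lemma V_ev:
  assumes "\<alpha> \<in> Vset \<beta> f l n m"
  shows "eventually (\<lambda>x. x \<notin> \<rat> \<longrightarrow> x \<in> Vset \<beta> f l n m) (nhds \<alpha>)"
proof -
  have irr: "\<alpha> \<notin> \<rat>" using assms unfolding Vset_def by auto
  show ?thesis using eventually_conj[OF den_ev[OF irr, of n] den_ev[OF irr, of "Suc n"]]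
    by (rule eventually_mono) (use assms in \<open>auto simp: Vset_def\<close>)
qed

definition Aset where "Aset \<beta> f l M = (\<Union>j\<in>{M..}. Uj \<beta> f l j)"

lemma A_ev:
  assumes "\<alpha> \<in> Aset \<beta> f l M"
  shows "eventually (\<lambda>x. x \<notin> \<rat> \<longrightarrow> x \<in> Aset \<beta> f l M) (nhds \<alpha>)"
proof -
  obtain j n where jn: "j \<ge> M" "n \<ge> 1" "\<alpha> \<in> Vset \<beta> f l n j"
    using assms unfolding Aset_def Uj_def by auto
  show ?thesis using V_ev[OF jn(3)]
    by (rule eventually_mono) (use jn in \<open>auto simp: Aset_def Uj_def\<close>)
qed

lemma A_irr: "\<alpha> \<in> Aset \<beta> f l M \<Longrightarrow> \<alpha> \<notin> \<rat>"
  unfolding Aset_def Uj_def Vset_def by auto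

lemma l_ge:
  assumes "\<And>k. k \<ge> 1 \<Longrightarrow> 0 < l k" "\<And>k. k \<ge> 1 \<Longrightarrow> l k < l (Suc k)"
  shows "j \<ge> 1 \<Longrightarrow> l j \<ge> j"
proof (induction j)
  case 0 then show ?case by simp
next
  case (Suc j)
  show ?case
  proof (cases "j = 0")
    case True then show ?thesis using assms(1)[of 1] by simp
  next
    case False
    then have "l j \<ge> j" using Suc by simp
    moreover have "l j < l (Suc j)" using assms(2)[of j] False by simp
    ultimately show ?thesis by simp
  qed
qed

lemma A_dense:
  assumes "\<And>k. k \<ge> 1 \<Longrightarrow> 0 < l k" "\<And>k. k \<ge> 1 \<Longrightarrow> l k < l (Suc k)" "e > 0"
  shows "\<exists>\<alpha>\<in>Aset \<beta> f l M. \<bar>\<alpha> - x\<bar> < e"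
proof -
  define \<epsilon> where "\<epsilon> = e / 2"
  have \<epsilon>0: "\<epsilon> > 0" unfolding \<epsilon>_def using assms by simp
  define j where "j = max M 1 + nat \<lceil>64 / \<epsilon>^2\<rceil> + 1"
  have j: "j \<ge> M" "j \<ge> 1" unfolding j_def by auto
  define L where "L = l j"
  have L1: "L \<ge> 1" unfolding L_def using l_ge[of l, OF assms(1,2) j(2)] j by simp
  have "real L \<ge> real j" unfolding L_def using l_ge[of l, OF assms(1,2) j(2)] by simp
  moreover have "real j > 64 / \<epsilon>^2" unfolding j_def by linarith
  ultimately have Lbig: "real L > 64 / \<epsilon>^2" by linarith
  obtain m :: int where m: "(x - \<epsilon>) * L < m" "m \<le> (x - \<epsilon>) * L + \<epsilon> * L" "coprime m (int L)"
    using coprime_window[OF L1 \<epsilon>0 Lbig, of "(x - \<epsilon>) * L"] by blast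
  have Lr: "real L \<ge> 1" using L1 by simp
  have mL: "x - \<epsilon> < m / L" "m / L \<le> x" using m(1,2) Lr by (auto simp: field_simps)
  define k :: int where "k = \<bar>m\<bar> + 1"
  define pi :: int where "pi = m + k * int L"
  have pi1: "pi \<ge> 1"
  proof -
    have "k * int L \<ge> k" using L1 unfolding k_def by simp
    then show ?thesis unfolding pi_def k_def by linarith
  qed
  define p :: nat where "p = nat pi"
  have pp: "int p = pi" unfolding p_def using pi1 by simp
  have p1: "p \<ge> 1" using pi1 unfolding p_def by simp
  have cop: "coprime p L"
  proof -
    have "coprime pi (int L)" unfolding pi_def by (rule coprime_shift[OF m(3)])
    then show ?thesis unfolding pp[symmetric] by simp
  qed
  define C :: real where "C = 2 * \<bar>real_of_int (cf_den \<beta> (eta \<beta> f l j))\<bar> * real L ^ 2"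
  obtain \<alpha>' n where a: "\<alpha>' \<notin> \<rat>" "\<bar>\<alpha>' - real p / real L\<bar> < \<epsilon>" "1 \<le> n" "n \<le> L"
    "cf_den \<alpha>' n = int L" "C < cf_den \<alpha>' (Suc n)"
    using Qlemma[OF L1 p1 cop \<epsilon>0, of C] by blast
  define \<alpha> where "\<alpha> = \<alpha>' + of_int (- k)"
  have irr: "\<alpha> \<notin> \<rat>" unfolding \<alpha>_def add.commute[of \<alpha>'] by (rule irrat_add_int[OF a(1)])
  have d1: "cf_den \<alpha> n = int (l j)" unfolding \<alpha>_def den_int_shift using a(5) L_def by simp
  have pLr: "real p / real L = m / L + k" using pp Lr unfolding pi_def
    by (simp add: field_simps) (metis of_int_add of_int_mult of_int_of_nat_eq)
  have "\<bar>\<alpha> - m / L\<bar> < \<epsilon>" using a(2) unfolding \<alpha>_def pLr by simp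
  then have close: "\<bar>\<alpha> - x\<bar> < e" using mL unfolding \<epsilon>_def by linarith
  have "real_of_int (2 * cf_den \<beta> (eta \<beta> f l j) * int n ^ 2) \<le> C"
  proof -
    have "real n ^ 2 \<le> real L ^ 2" using a(4) by (simp add: power_mono)
    have "2 * real_of_int (cf_den \<beta> (eta \<beta> f l j)) * real n ^ 2 \<le> 2 * \<bar>real_of_int (cf_den \<beta> (eta \<beta> f l j))\<bar> * real n ^ 2"
      by (intro mult_right_mono) auto
    also have "\<dots> \<le> 2 * \<bar>real_of_int (cf_den \<beta> (eta \<beta> f l j))\<bar> * real L ^ 2"
      using \<open>real n ^ 2 \<le> real L ^ 2\<close> by (intro mult_left_mono) auto
    finally have "2 * real_of_int (cf_den \<beta> (eta \<beta> f l j)) * real n ^ 2 \<le> 2 * \<bar>real_of_int (cf_den \<beta> (eta \<beta> f l j))\<bar> * real L ^ 2" .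
    then show ?thesis unfolding C_def by simp
  qed
  then have d2: "cf_den \<alpha> (Suc n) > 2 * cf_den \<beta> (eta \<beta> f l j) * int n ^ 2"
    using a(6) unfolding \<alpha>_def den_int_shift by linarith
  have "\<alpha> \<in> Vset \<beta> f l n j" unfolding Vset_def using irr d1 d2 by simp
  then have "\<alpha> \<in> Aset \<beta> f l M" unfolding Aset_def Uj_def using j a(3) by auto
  then show ?thesis using close by blast
qed


theorem theorem6p3:
  fixes \<beta> :: real and f :: "real \<Rightarrow> real" and l :: "nat \<Rightarrow> nat"
  assumes "\<beta> \<notin> \<rat>"
    and "\<And>x. f (x + 1) = f x"
    and "real_analytic f"
    and "\<not> trig_polynomial f"
    and "\<And>k. k \<ge> 1 \<Longrightarrow> 0 < l k"
    and "\<And>k. k \<ge> 1 \<Longrightarrow> l k < l (Suc k)"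
    and "\<And>k. k \<ge> 1 \<Longrightarrow> fourier_coeff f (int (l k)) \<noteq> 0"
    and "(\<lambda>k. Tsum f (l k) / cmod (fourier_coeff f (int (l k)))) \<longlonglongrightarrow> 0"
  shows "gdelta_in euclideanreal (Uset \<beta> f l) \<and> closure (Uset \<beta> f l) = UNIV"
proof -
  define A where "A M = Aset \<beta> f l M" for M
  define Op where "Op M = {a. eventually (\<lambda>x. x \<notin> \<rat> \<longrightarrow> x \<in> A M) (nhds a)}" for M
  have opn: "open (Op M)" for M
  proof (rule open_subopen[THEN iffD2], rule ballI)
    fix a assume "a \<in> Op M"
    then obtain S where S: "open S" "a \<in> S" "\<forall>x\<in>S. x \<notin> \<rat> \<longrightarrow> x \<in> A M"
      unfolding Op_def eventually_nhds by auto
    have "S \<subseteq> Op M"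
    proof
      fix y assume "y \<in> S"
      then show "y \<in> Op M" unfolding Op_def eventually_nhds using S by blast
    qed
    then show "\<exists>T. open T \<and> a \<in> T \<and> T \<subseteq> Op M" using S by blast
  qed
  have AO: "A M = Op M - \<rat>" for M
  proof
    show "A M \<subseteq> Op M - \<rat>" unfolding Op_def A_def using A_ev A_irr by blast
    show "Op M - \<rat> \<subseteq> A M" unfolding Op_def using eventually_nhds_x_imp_x by fastforce
  qed
  have Acl: "closure (A M) = UNIV" for M
  proof -
    have "x \<in> closure (A M)" for x
      unfolding closure_approachable dist_real_def A_def
      using A_dense[of l, OF assms(5,6)] by blast
    then show ?thesis by auto
  qed
  define G where "G = Op ` {1..} \<union> (\<lambda>r. - {r}) ` \<rat>"
  have UG: "Uset \<beta> f l = \<Inter>G"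
  proof -
    have "Uset \<beta> f l = (\<Inter>M\<in>{1..}. A M)" unfolding Uset_def A_def Aset_def by simp
    also have "\<dots> = \<Inter>G"
    proof
      show "(\<Inter>M\<in>{1..}. A M) \<subseteq> \<Inter>G"
      proof
        fix x assume x: "x \<in> (\<Inter>M\<in>{1..}. A M)"
        then have "x \<in> A 1" by auto
        then have "x \<notin> \<rat>" using AO by auto
        then show "x \<in> \<Inter>G" using x AO unfolding G_def by auto
      qed
      show "\<Inter>G \<subseteq> (\<Inter>M\<in>{1..}. A M)"
      proof
        fix x assume x: "x \<in> \<Inter>G"
        then have "x \<notin> \<rat>" unfolding G_def by auto
        moreover have "x \<in> Op M" if "M \<ge> 1" for M using x that unfolding G_def by auto
        ultimately show "x \<in> (\<Inter>M\<in>{1..}. A M)" using AO by auto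
      qed
    qed
    finally show ?thesis .
  qed
  have cG: "countable G" unfolding G_def by (intro countable_Un countable_image countable_rat) auto
  have Gne: "G \<noteq> {}" unfolding G_def by auto
  have Gopen: "open T" if "T \<in> G" for T
    using that opn unfolding G_def by auto
  have Gdense: "closure T = UNIV" if TG: "T \<in> G" for T
  proof -
    consider (a) M where "T = Op M" | (b) r where "T = - {r}" using TG unfolding G_def by auto
    then show ?thesis
    proof cases
      case a
      have "A M \<subseteq> Op M" using AO by auto
      then have "closure (A M) \<subseteq> closure T" using a by (simp add: closure_mono)
      then show ?thesis using Acl by auto
    next
      case b
      then show ?thesis by (simp add: closure_complement interior_singleton)
    qed
  qed
  have gd: "gdelta_in euclideanreal (Uset \<beta> f l)"
    unfolding UG
  proof (rule gdelta_in_Inter[OF cG Gne])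
    fix S assume "S \<in> G"
    then have "open S" by (rule Gopen)
    then have "openin euclideanreal S" using open_openin by blast
    then show "gdelta_in euclideanreal S" by (rule open_imp_gdelta_in)
  qed
  have "UNIV \<subseteq> closure (\<Inter>G)"
  proof (rule Baire)
    show "closed (UNIV::real set)" by simp
    show "countable G" by (rule cG)
    fix T assume T: "T \<in> G"
    have "openin euclidean T" using Gopen[OF T] open_openin by blast
    then show "openin (top_of_set UNIV) T \<and> UNIV \<subseteq> closure T" using Gdense[OF T] by simp
  qed
  then have "closure (Uset \<beta> f l) = UNIV" unfolding UG by auto
  with gd show ?thesis by blast
qed


end
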